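(* Let $\mathcal{F}$ be a strong regular facets-pairing structure on $\mathcal{C}^n$ and let $e\subset f$ be proper faces of $\mathcal{C}^n$ with $\dim f-\dim e=1$. Then either $|\widehat e|=|\widehat f|$ or $|\widehat e|=2|\widehat f|$, where $|\widehat g|$ denotes the number of faces in the face family $\widehat g$.
   Context: Let $[\pm n]=\{\pm1,\dots,\pm n\}$ and $\mathcal{C}^n=\{x\in\mathbb{R}^n: -\tfrac14\le x_i\le\tfrac14\}$. For $1\le i\le n$, $\mathbf{F}(i)$ and $\mathbf{F}(-i)$ denote the facets of $\mathcal{C}^n$ in $\{x_i=\tfrac14\}$ and $\{x_i=-\tfrac14\}$; for $j_1,\dots,j_s\in[\pm n]$ with distinct absolute values, $\mathbf{F}(j_1,\dots,j_s)=\bigcap_i\mathbf{F}(j_i)$ (every proper face has this form). A signed permutation is a bijection $\sigma$ of $[\pm n]$ with $\sigma(-k)=-\sigma(k)$. A facets-pairing structure on $\mathcal{C}^n$ is a pair $(\omega,\{\tau_j\})$ where $\omega$ is a bijection of $[\pm n]$ with $\omega\circ\omega=\mathrm{id}$ and $\tau_j:\mathbf{F}(j)\to\mathbf{F}(\omega(j))$ are face-preserving homeomorphisms with $\tau_{\omega(j)}=\tau_j^{-1}$, such that for all $|j|\ne|k|$, writing $\tau_j(\mathbf{F}(j,k))=\mathbf{F}(\omega(j),k')$ and $\tau_k(\mathbf{F}(j,k))=\mathbf{F}(j',\omega(k))$, one has $\tau_{k'}\tau_j(p)=\tau_{j'}\tau_k(p)$ for all $p\in\mathbf{F}(j,k)$.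 It is regular if each $\tau_j$ is a Euclidean isometry and $\omega$ is a signed permutation. A composition $\tau_{k_m}\circ\dots\circ\tau_{k_1}$ applied to a proper face $f$ is valid if $f\subset\mathbf{F}(k_1)$ and $\tau_{k_i}\circ\dots\circ\tau_{k_1}(f)\subset\mathbf{F}(k_{i+1})$ for $1\le i<m$ ($m=0$ allowed). The face family $\widehat f$ is the set of faces $\tau_{k_m}\circ\dots\circ\tau_{k_1}(f)$ over all valid compositions. For a proper face $f$ let $\Xi(f)$ be the set of facets containing $f$. If $f\subset\mathbf{F}(k)$ and $f'=\tau_k(f)$, define $\Psi^f_k:\Xi(f)\to\Xi(f')$ by $\Psi^f_k(\mathbf{F}(k))=\mathbf{F}(\omega(k))$ and, for $F'\in\Xi(f)\setminus\{\mathbf{F}(k)\}$, $\Psi^f_k(F')$ is the facet $G$ with $G\cap\mathbf{F}(\omega(k))=\tau_k(F'\cap\mathbf{F}(k))$. $\mathcal{F}$ is strong if for every proper face $f$ and any two valid compositions mapping $f$ onto the same face $\widetilde f$: (a) they agree at every point of $f$; and (b) the corresponding composites of the maps $\Psi$ along the two compositions coincide as maps $\Xi(f)\to\Xi(\widetilde f)$. *)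

theory Defs
  imports "HOL-Analysis.Analysis"
begin

text \<open>The cube C^n = [-1/4,1/4]^n, with coordinates indexed by a finite type 'n
 (so n = CARD('n)). A signed index j in [+-n] is a pair (i, b) with i :: 'n and
 b = True meaning +i, b = False meaning -i.\<close>

type_synonym 'n sidx = "'n \<times> bool"

definition sneg :: "'n sidx \<Rightarrow> 'n sidx" where
  "sneg j = (fst j, \<not> snd j)"

definition cube :: "(real ^ 'n) set" where
  "cube = {x. \<forall>i. - (1/4) \<le> x $ i \<and> x $ i \<le> 1/4}"

definition sgnset :: "'n sidx set \<Rightarrow> bool" where
  "sgnset J \<longleftrightarrow> (\<forall>j\<in>J. \<forall>k\<in>J. fst j = fst k \<longrightarrow> j = k)"

definition cface :: "'n sidx set \<Rightarrow> (real ^ 'n) set" where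
  "cface J = {x \<in> cube. \<forall>j\<in>J. x $ fst j = (if snd j then 1/4 else - (1/4))}"

definition facet :: "'n sidx \<Rightarrow> (real ^ 'n) set" where
  "facet j = cface {j}"

definition proper_face :: "(real ^ 'n) set \<Rightarrow> bool" where
  "proper_face f \<longleftrightarrow> (\<exists>J. sgnset J \<and> J \<noteq> {} \<and> f = cface J)"

definition signed_perm :: "('n sidx \<Rightarrow> 'n sidx) \<Rightarrow> bool" where
  "signed_perm \<omega> \<longleftrightarrow> bij \<omega> \<and> (\<forall>k. \<omega> (sneg k) = sneg (\<omega> k))"

definition fps :: "('n sidx \<Rightarrow> 'n sidx) \<Rightarrow> ('n sidx \<Rightarrow> real ^ 'n \<Rightarrow> real ^ 'n) \<Rightarrow> bool" where
  "fps \<omega> \<tau> \<longleftrightarrow>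
     bij \<omega> \<and> (\<forall>j. \<omega> (\<omega> j) = j) \<and>
     (\<forall>j. homeomorphism (facet j) (facet (\<omega> j)) (\<tau> j) (\<tau> (\<omega> j))) \<and>
     (\<forall>j g. proper_face g \<longrightarrow> g \<subseteq> facet j \<longrightarrow> proper_face (\<tau> j ` g)) \<and>
     (\<forall>j k j' k'. fst j \<noteq> fst k \<longrightarrow>
        fst (\<omega> j) \<noteq> fst k' \<longrightarrow> fst j' \<noteq> fst (\<omega> k) \<longrightarrow>
        \<tau> j ` cface {j, k} = cface {\<omega> j, k'} \<longrightarrow>
        \<tau> k ` cface {j, k} = cface {j', \<omega> k} \<longrightarrow>
        (\<forall>p\<in>cface {j, k}. \<tau> k' (\<tau> j p) = \<tau> j' (\<tau> k p)))"

definition regular_fps :: "('n sidx \<Rightarrow> 'n sidx) \<Rightarrow> ('n sidx \<Rightarrow> real ^ 'n \<Rightarrow> real ^ 'n) \<Rightarrow> bool" where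
  "regular_fps \<omega> \<tau> \<longleftrightarrow> fps \<omega> \<tau> \<and> signed_perm \<omega> \<and>
     (\<forall>j. \<forall>x\<in>facet j. \<forall>y\<in>facet j. dist (\<tau> j x) (\<tau> j y) = dist x y)"

text \<open>Valid compositions: a list [k_1,...,k_m] applied to f (k_1 first).\<close>
fun valid_comp :: "('n sidx \<Rightarrow> real ^ 'n \<Rightarrow> real ^ 'n) \<Rightarrow> (real ^ 'n) set \<Rightarrow> 'n sidx list \<Rightarrow> bool" where
  "valid_comp \<tau> f [] = True"
| "valid_comp \<tau> f (k # ks) = (f \<subseteq> facet k \<and> valid_comp \<tau> (\<tau> k ` f) ks)"

fun comp_map :: "('n sidx \<Rightarrow> real ^ 'n \<Rightarrow> real ^ 'n) \<Rightarrow> 'n sidx list \<Rightarrow> real ^ 'n \<Rightarrow> real ^ 'n" where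
  "comp_map \<tau> [] = id"
| "comp_map \<tau> (k # ks) = comp_map \<tau> ks \<circ> \<tau> k"

definition face_family :: "('n sidx \<Rightarrow> real ^ 'n \<Rightarrow> real ^ 'n) \<Rightarrow> (real ^ 'n) set \<Rightarrow> (real ^ 'n) set set" where
  "face_family \<tau> f = {comp_map \<tau> ks ` f | ks. valid_comp \<tau> f ks}"

text \<open>The map \<Psi>^f_k on facets containing f, facets represented by their signed index.\<close>
definition Psi :: "('n sidx \<Rightarrow> 'n sidx) \<Rightarrow> ('n sidx \<Rightarrow> real ^ 'n \<Rightarrow> real ^ 'n) \<Rightarrow> 'n sidx \<Rightarrow> 'n sidx \<Rightarrow> 'n sidx" where
  "Psi \<omega> \<tau> k l = (if l = k then \<omega> k
      else (SOME m. facet m \<inter> facet (\<omega> k) = \<tau> k ` (facet l \<inter> facet k)))"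

fun Psi_comp :: "('n sidx \<Rightarrow> 'n sidx) \<Rightarrow> ('n sidx \<Rightarrow> real ^ 'n \<Rightarrow> real ^ 'n) \<Rightarrow> 'n sidx list \<Rightarrow> 'n sidx \<Rightarrow> 'n sidx" where
  "Psi_comp \<omega> \<tau> [] = id"
| "Psi_comp \<omega> \<tau> (k # ks) = Psi_comp \<omega> \<tau> ks \<circ> Psi \<omega> \<tau> k"

definition strong_fps :: "('n sidx \<Rightarrow> 'n sidx) \<Rightarrow> ('n sidx \<Rightarrow> real ^ 'n \<Rightarrow> real ^ 'n) \<Rightarrow> bool" where
  "strong_fps \<omega> \<tau> \<longleftrightarrow> fps \<omega> \<tau> \<and>
     (\<forall>f ks ks'. proper_face f \<longrightarrow> valid_comp \<tau> f ks \<longrightarrow> valid_comp \<tau> f ks' \<longrightarrow>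
        comp_map \<tau> ks ` f = comp_map \<tau> ks' ` f \<longrightarrow>
        (\<forall>p\<in>f. comp_map \<tau> ks p = comp_map \<tau> ks' p) \<and>
        (\<forall>l. f \<subseteq> facet l \<longrightarrow> Psi_comp \<omega> \<tau> ks l = Psi_comp \<omega> \<tau> ks' l))"

end

theory Submission
  imports Defs
begin


definition pt :: "'n::finite sidx set \<Rightarrow> real ^ 'n" where
  "pt A = (\<chi> i. if (i,True) \<in> A then 1/4 else if (i,False) \<in> A then -(1/4) else 0)"

lemma cface_mem: "x \<in> cface A \<longleftrightarrow> x \<in> cube \<and> (\<forall>j\<in>A. x $ fst j = (if snd j then 1/4 else - (1/4)))"
  by (simp add: cface_def)

lemma pt_in: assumes "sgnset A" shows "pt A \<in> cface A"
proof -
  have "pt A \<in> cube" by (auto simp: cube_def pt_def)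
  moreover have "\<forall>j\<in>A. pt A $ fst j = (if snd j then 1/4 else - (1/4))"
  proof
    fix j assume j: "j \<in> A"
    obtain i s where js: "j = (i,s)" by (cases j)
    show "pt A $ fst j = (if snd j then 1/4 else - (1/4))"
    proof (cases s)
      case True then show ?thesis using j js by (simp add: pt_def)
    next
      case False
      have "(i,True) \<notin> A" using assms j js False unfolding sgnset_def by fastforce
      then show ?thesis using j js False by (simp add: pt_def)
    qed
  qed
  ultimately show ?thesis by (simp add: cface_mem)
qed

lemma cface_sub_imp: assumes "sgnset A" "cface A \<subseteq> cface B" shows "B \<subseteq> A"
proof
  fix j assume j: "j \<in> B"
  obtain i s where js: "j = (i,s)" by (cases j)
  have "pt A \<in> cface B" using pt_in[OF assms(1)] assms(2) by blast
  hence v: "pt A $ i = (if s then 1/4 else - (1/4))" using j js by (auto simp: cface_mem)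
  show "j \<in> A"
  proof (cases s)
    case True then show ?thesis using v js by (auto simp: pt_def split: if_splits)
  next
    case False then show ?thesis using v js by (auto simp: pt_def split: if_splits)
  qed
qed

lemma cface_inj: "sgnset A \<Longrightarrow> sgnset B \<Longrightarrow> cface A = cface B \<Longrightarrow> A = B"
  using cface_sub_imp by blast

lemma cface_ne_sgnset: assumes "cface A \<noteq> {}" shows "sgnset A"
  unfolding sgnset_def
proof (intro ballI impI)
  fix j k assume j: "j \<in> A" and k: "k \<in> A" and f: "fst j = fst k"
  obtain x where x: "x \<in> cface A" using assms by blast
  have "x $ fst j = (if snd j then 1/4 else - (1/4))" "x $ fst k = (if snd k then 1/4 else - (1/4))"
    using x j k by (auto simp: cface_mem)
  then have "snd j = snd k" using f by (auto split: if_splits)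
  then show "j = k" using f by (simp add: prod_eq_iff)
qed

lemma cface_antimono: "A \<subseteq> B \<Longrightarrow> cface B \<subseteq> cface A"
  by (auto simp: cface_def)

lemma cface_Int: "cface A \<inter> cface B = cface (A \<union> B)"
  by (auto simp: cface_def)

lemma sub_facet_iff: assumes "sgnset A" shows "cface A \<subseteq> facet k \<longleftrightarrow> k \<in> A"
proof
  assume "cface A \<subseteq> facet k" then show "k \<in> A" using cface_sub_imp[OF assms, of "{k}"] by (simp add: facet_def)
next
  assume "k \<in> A" then show "cface A \<subseteq> facet k" unfolding facet_def by (intro cface_antimono) auto
qed

lemma cface_INT: assumes "j \<in> A" shows "cface A = (\<Inter>l\<in>A. cface {j,l})"
proof (rule set_eqI)
  fix x
  have "x \<in> (\<Inter>l\<in>A. cface {j,l}) \<longleftrightarrow> (\<forall>l\<in>A. x \<in> cface {j,l})" by blast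
  also have "\<dots> \<longleftrightarrow> x \<in> cface A" using assms unfolding cface_mem by auto
  finally show "x \<in> cface A \<longleftrightarrow> x \<in> (\<Inter>l\<in>A. cface {j,l})" by simp
qed




lemma sgnset_pair: "sgnset {a,b} \<longleftrightarrow> (fst a = fst b \<longrightarrow> a = b)"
  unfolding sgnset_def by auto

lemma sgnset_subset: "sgnset A \<Longrightarrow> B \<subseteq> A \<Longrightarrow> sgnset B"
  unfolding sgnset_def by blast

lemma proper_faceE: assumes "proper_face g" obtains H where "sgnset H" "H \<noteq> {}" "g = cface H"
  using assms unfolding proper_face_def by blast

lemma proper_faceI: "sgnset H \<Longrightarrow> H \<noteq> {} \<Longrightarrow> proper_face (cface H)"
  unfolding proper_face_def by blast

locale fpsl =
  fixes \<omega> :: "'n::finite sidx \<Rightarrow> 'n sidx" and \<tau> :: "'n sidx \<Rightarrow> real ^ 'n \<Rightarrow> real ^ 'n"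
  assumes F: "fps \<omega> \<tau>"
begin

lemma om_inv[simp]: "\<omega> (\<omega> j) = j" using F unfolding fps_def by blast

lemma hom: "homeomorphism (facet j) (facet (\<omega> j)) (\<tau> j) (\<tau> (\<omega> j))"
  using F unfolding fps_def by blast

lemma img: "\<tau> j ` facet j = facet (\<omega> j)" using hom[of j] unfolding homeomorphism_def by blast

lemma inv1: "x \<in> facet j \<Longrightarrow> \<tau> (\<omega> j) (\<tau> j x) = x" using hom[of j] unfolding homeomorphism_def by blast

lemma injf: "inj_on (\<tau> j) (facet j)" by (metis inj_on_inverseI inv1)

lemma img_sub: "S \<subseteq> facet j \<Longrightarrow> \<tau> j ` S \<subseteq> facet (\<omega> j)" using img by blast

lemma cancel: assumes "S \<subseteq> facet m" shows "\<tau> (\<omega> m) ` \<tau> m ` S = S"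
proof -
  have "\<tau> (\<omega> m) ` \<tau> m ` S = (\<lambda>x. \<tau> (\<omega> m) (\<tau> m x)) ` S" by (simp add: image_image)
  also have "\<dots> = (\<lambda>x. x) ` S" by (rule image_cong) (use assms inv1[of _ m] in blast)+
  finally show ?thesis by simp
qed

lemma pf: "proper_face g \<Longrightarrow> g \<subseteq> facet j \<Longrightarrow> proper_face (\<tau> j ` g)"
  using F unfolding fps_def by blast

lemma compat: "fst j \<noteq> fst k \<Longrightarrow> fst (\<omega> j) \<noteq> fst k' \<Longrightarrow> fst j' \<noteq> fst (\<omega> k) \<Longrightarrow>
        \<tau> j ` cface {j, k} = cface {\<omega> j, k'} \<Longrightarrow>
        \<tau> k ` cface {j, k} = cface {j', \<omega> k} \<Longrightarrow>
        p \<in> cface {j, k} \<Longrightarrow> \<tau> k' (\<tau> j p) = \<tau> j' (\<tau> k p)"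
  using F unfolding fps_def by blast

abbreviation PS where "PS \<equiv> Psi \<omega> \<tau>"

lemma PS_self[simp]: "PS j j = \<omega> j" by (simp add: Psi_def)

lemma L1:
  assumes jl: "fst j \<noteq> fst l"
  shows "\<tau> j ` cface {j,l} = cface {\<omega> j, PS j l} \<and> fst (PS j l) \<noteq> fst (\<omega> j)"
proof -
  define X where "X = cface {j,l}"
  have sgX: "sgnset {j,l}" using jl by (simp add: sgnset_pair)
  have Xsub: "X \<subseteq> facet j" unfolding X_def using sub_facet_iff[OF sgX] by simp
  have pX: "proper_face X" unfolding X_def by (rule proper_faceI[OF sgX]) simp
  obtain H where sgH: "sgnset H" and Hne: "H \<noteq> {}" and XH: "\<tau> j ` X = cface H"
    using pf[OF pX Xsub] by (rule proper_faceE)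
  have "cface H \<subseteq> facet (\<omega> j)" using XH img_sub[OF Xsub] by simp
  hence ojH: "\<omega> j \<in> H" using sub_facet_iff[OF sgH] by simp
  have lj: "l \<noteq> j" using jl by auto
  have "H \<noteq> {\<omega> j}"
  proof
    assume "H = {\<omega> j}"
    hence "\<tau> j ` X = \<tau> j ` facet j" using XH img by (simp add: facet_def)
    hence "X = facet j" by (metis inj_on_image_eq_iff injf order_refl Xsub)
    hence "{j,l} = {j}" using cface_inj[OF sgX, of "{j}"] by (simp add: X_def facet_def sgnset_def)
    thus False using lj by auto
  qed
  then obtain l' where l'H: "l' \<in> H" and l'ne: "l' \<noteq> \<omega> j" using ojH by blast
  have Heq: "H = {\<omega> j, l'}"
  proof (rule ccontr)
    assume "H \<noteq> {\<omega> j, l'}"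
    then obtain m where mH: "m \<in> H" and mn: "m \<notin> {\<omega> j, l'}" using ojH l'H by blast
    define H' where "H' = {\<omega> j, l'}"
    have sgH': "sgnset H'" using sgnset_subset[OF sgH] ojH l'H by (simp add: H'_def)
    have Y'sub: "cface H' \<subseteq> facet (\<omega> j)" using sub_facet_iff[OF sgH'] by (simp add: H'_def)
    have pY': "proper_face (cface H')" by (rule proper_faceI[OF sgH']) (simp add: H'_def)
    obtain G where sgG: "sgnset G" and Gne: "G \<noteq> {}" and ZG: "\<tau> (\<omega> j) ` cface H' = cface G"
      using pf[OF pY' Y'sub] by (rule proper_faceE)
    have "cface G \<subseteq> facet j" using ZG img_sub[OF Y'sub] by simp
    hence jG: "j \<in> G" using sub_facet_iff[OF sgG] by simp
    have "cface H \<subseteq> cface H'" by (rule cface_antimono) (use ojH l'H in \<open>auto simp: H'_def\<close>)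
    hence "\<tau> (\<omega> j) ` \<tau> j ` X \<subseteq> cface G" using XH ZG by blast
    hence "X \<subseteq> cface G" using cancel[OF Xsub] by simp
    hence GS: "G \<subseteq> {j,l}" using cface_sub_imp[OF sgX] by (simp add: X_def)
    have bk: "\<tau> j ` cface G = cface H'"
      using cancel[OF Y'sub] ZG by simp
    show False
    proof (cases "l \<in> G")
      case True
      hence "G = {j,l}" using GS jG by auto
      hence "cface H' = cface H" using bk XH by (simp add: X_def)
      hence "H' = H" using cface_inj[OF sgH' sgH] by simp
      thus False using mH mn by (simp add: H'_def)
    next
      case False
      hence "G = {j}" using GS jG by auto
      hence "cface H' = cface {\<omega> j}" using bk img by (simp add: facet_def)
      hence "H' = {\<omega> j}" using cface_inj[OF sgH'] by (simp add: sgnset_def)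
      thus False using l'ne by (auto simp: H'_def)
    qed
  qed
  have fl': "fst l' \<noteq> fst (\<omega> j)" using sgH l'H ojH l'ne unfolding sgnset_def by blast
  have XH2: "\<tau> j ` X = cface {\<omega> j, l'}" using XH Heq by simp
  have fl: "facet l \<inter> facet j = X" by (simp add: facet_def cface_Int X_def insert_commute)
  have wit: "facet l' \<inter> facet (\<omega> j) = \<tau> j ` (facet l \<inter> facet j)"
    using XH2 fl by (simp add: facet_def cface_Int insert_commute)
  define m where "m = PS j l"
  have "facet m \<inter> facet (\<omega> j) = \<tau> j ` (facet l \<inter> facet j)"
    unfolding m_def Psi_def using lj by simp (rule someI, rule wit)
  hence meq: "cface {m, \<omega> j} = cface {\<omega> j, l'}" using XH2 fl by (simp add: facet_def cface_Int insert_commute)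
  have sg2: "sgnset {\<omega> j, l'}" using fl' by (auto simp: sgnset_pair)
  have "cface {\<omega> j, l'} \<noteq> {}" using pt_in[OF sg2] by blast
  hence "sgnset {m, \<omega> j}" using meq cface_ne_sgnset by metis
  hence "{m, \<omega> j} = {\<omega> j, l'}" using cface_inj sg2 meq by blast
  hence "m = l'" using l'ne by (auto simp: doubleton_eq_iff)
  thus ?thesis using XH2 fl' by (simp add: X_def m_def)
qed

end



lemma vc_append: "valid_comp \<tau> f (xs @ ys) = (valid_comp \<tau> f xs \<and> valid_comp \<tau> (comp_map \<tau> xs ` f) ys)"
  by (induction xs arbitrary: f) (auto simp: image_comp)

lemma cm_append: "comp_map \<tau> (xs @ ys) = comp_map \<tau> ys \<circ> comp_map \<tau> xs"
  by (induction xs) (auto simp: comp_assoc)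

lemma PC_append: "Psi_comp \<omega> \<tau> (xs @ ys) = Psi_comp \<omega> \<tau> ys \<circ> Psi_comp \<omega> \<tau> xs"
  by (induction xs) (auto simp: comp_assoc)

lemma vc_mono: "valid_comp \<tau> f ks \<Longrightarrow> e \<subseteq> f \<Longrightarrow> valid_comp \<tau> e ks"
proof (induction ks arbitrary: f e)
  case (Cons k ks)
  have "\<tau> k ` e \<subseteq> \<tau> k ` f" using Cons.prems(2) by (rule image_mono)
  then show ?case using Cons.prems Cons.IH[of "\<tau> k ` f" "\<tau> k ` e"] by auto
qed simp

context fpsl begin

lemma L2:
  assumes sg: "sgnset G" and jG: "j \<in> G"
  shows "\<tau> j ` cface G = cface (PS j ` G) \<and> sgnset (PS j ` G) \<and> inj_on (PS j) G"
proof -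
  have sub: "\<forall>l\<in>G. cface {j,l} \<subseteq> facet j" unfolding facet_def by (auto simp: cface_def)
  have "\<tau> j ` cface G = \<tau> j ` (\<Inter>l\<in>G. cface {j,l})" using cface_INT[OF jG] by simp
  also have "\<dots> = (\<Inter>l\<in>G. \<tau> j ` cface {j,l})" by (rule image_INT[OF injf sub jG])
  also have "\<dots> = (\<Inter>l\<in>G. cface {\<omega> j, PS j l})"
  proof (rule INF_cong[OF refl])
    fix l assume lG: "l \<in> G"
    show "\<tau> j ` cface {j,l} = cface {\<omega> j, PS j l}"
    proof (cases "l = j")
      case True then show ?thesis using img[of j] by (simp add: facet_def)
    next
      case False
      hence "fst j \<noteq> fst l" using sg jG lG unfolding sgnset_def by blast
      then show ?thesis using L1 by blast
    qed
  qed
  also have "\<dots> = (\<Inter>m\<in>PS j ` G. cface {\<omega> j, m})" by (simp add: image_comp)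
  also have "\<dots> = cface (PS j ` G)"
  proof -
    have "PS j j \<in> PS j ` G" using jG by (rule imageI)
    hence "\<omega> j \<in> PS j ` G" by simp
    thus ?thesis by (rule cface_INT[symmetric])
  qed
  finally have eq: "\<tau> j ` cface G = cface (PS j ` G)" .
  have "cface G \<noteq> {}" using pt_in[OF sg] by blast
  hence "cface (PS j ` G) \<noteq> {}" using eq by blast
  hence sg2: "sgnset (PS j ` G)" by (rule cface_ne_sgnset)
  have inj: "inj_on (PS j) G"
  proof (rule inj_onI)
    fix l1 l2 assume l1: "l1 \<in> G" and l2: "l2 \<in> G" and eqp: "PS j l1 = PS j l2"
    show "l1 = l2"
    proof (cases "l1 = j")
      case True
      show ?thesis
      proof (rule ccontr)
        assume "l1 \<noteq> l2"
        hence "fst j \<noteq> fst l2" using True sg jG l2 unfolding sgnset_def by blast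
        thus False using L1[of j l2] eqp True by simp
      qed
    next
      case False
      note l1j = False
      show ?thesis
      proof (cases "l2 = j")
        case True
        have "fst j \<noteq> fst l1" using l1j sg jG l1 unfolding sgnset_def by blast
        thus ?thesis using L1[of j l1] eqp True by simp
      next
        case False
        have f1: "fst j \<noteq> fst l1" using l1j sg jG l1 unfolding sgnset_def by blast
        have f2: "fst j \<noteq> fst l2" using False sg jG l2 unfolding sgnset_def by blast
        have "\<tau> j ` cface {j,l1} = \<tau> j ` cface {j,l2}" using L1[OF f1] L1[OF f2] eqp by simp
        moreover have "cface {j,l1} \<subseteq> facet j" "cface {j,l2} \<subseteq> facet j" using sub l1 l2 by auto
        ultimately have "cface {j,l1} = cface {j,l2}"
          using inj_on_image_eq_iff[OF injf] by blast
        moreover have "sgnset {j,l1}" "sgnset {j,l2}" using f1 f2 by (auto simp: sgnset_pair)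
        ultimately have "{j,l1} = {j,l2}" using cface_inj by blast
        thus ?thesis using l1j False by (auto simp: doubleton_eq_iff)
      qed
    qed
  qed
  show ?thesis using eq sg2 inj by blast
qed

abbreviation vc where "vc \<equiv> valid_comp \<tau>"
abbreviation cm where "cm \<equiv> comp_map \<tau>"
abbreviation PC where "PC \<equiv> Psi_comp \<omega> \<tau>"

lemma vc_face:
  "sgnset G \<Longrightarrow> vc (cface G) ks \<Longrightarrow>
     cm ks ` cface G = cface (PC ks ` G) \<and> sgnset (PC ks ` G) \<and> inj_on (PC ks) G"
proof (induction ks arbitrary: G)
  case Nil then show ?case by simp
next
  case (Cons k ks)
  have kG: "k \<in> G" using Cons.prems(2) sub_facet_iff[OF Cons.prems(1)] by simp
  note L = L2[OF Cons.prems(1) kG]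
  have "vc (cface (PS k ` G)) ks" using Cons.prems(2) L by simp
  from Cons.IH[OF conjunct1[OF conjunct2[OF L]] this]
  have IH: "cm ks ` cface (PS k ` G) = cface (PC ks ` PS k ` G) \<and>
        sgnset (PC ks ` PS k ` G) \<and> inj_on (PC ks) (PS k ` G)" .
  have "cm (k#ks) ` cface G = cm ks ` (\<tau> k ` cface G)" by (simp add: image_comp)
  also have "\<dots> = cface (PC ks ` PS k ` G)" using IH L by simp
  also have "\<dots> = cface (PC (k#ks) ` G)" by (simp add: image_comp)
  finally have e1: "cm (k#ks) ` cface G = cface (PC (k#ks) ` G)" .
  have e2: "sgnset (PC (k#ks) ` G)" using IH by (simp add: image_comp)
  have e3: "inj_on (PC (k#ks)) G" using comp_inj_on[of "PS k" G "PC ks"] IH L by simp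
  show ?case using e1 e2 e3 by blast
qed

lemma vc_snoc:
  assumes "sgnset G"
  shows "vc (cface G) (ks @ [l]) \<longleftrightarrow> vc (cface G) ks \<and> l \<in> PC ks ` G"
proof -
  have "vc (cface G) (ks @ [l]) \<longleftrightarrow> vc (cface G) ks \<and> cm ks ` cface G \<subseteq> facet l"
    by (simp add: vc_append)
  also have "\<dots> \<longleftrightarrow> vc (cface G) ks \<and> l \<in> PC ks ` G"
  proof (cases "vc (cface G) ks")
    case True
    then have "cm ks ` cface G = cface (PC ks ` G)" "sgnset (PC ks ` G)" using vc_face[OF assms] by auto
    then show ?thesis using sub_facet_iff[of "PC ks ` G" l] True by simp
  qed simp
  finally show ?thesis .
qed

lemma square:
  assumes "fst j \<noteq> fst l" "p \<in> cface {j,l}"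
  shows "\<tau> (PS j l) (\<tau> j p) = \<tau> (PS l j) (\<tau> l p)"
proof -
  have a: "\<tau> j ` cface {j,l} = cface {\<omega> j, PS j l}" "fst (PS j l) \<noteq> fst (\<omega> j)" using L1[OF assms(1)] by auto
  have "fst l \<noteq> fst j" using assms(1) by simp
  from L1[OF this] have b: "\<tau> l ` cface {j,l} = cface {PS l j, \<omega> l}" "fst (PS l j) \<noteq> fst (\<omega> l)"
    by (auto simp: insert_commute)
  show ?thesis by (rule compat[OF assms(1) a(2)[THEN not_sym] b(2) a(1) b(1) assms(2)])
qed

end



lemma card_kernel:
  assumes "\<forall>x\<in>L. \<forall>y\<in>L. (\<alpha> x = \<alpha> y) = (\<beta> x = \<beta> y)"
  shows "card (\<alpha> ` L) = card (\<beta> ` L)"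
proof -
  define h where "h a = \<beta> (SOME x. x \<in> L \<and> \<alpha> x = a)" for a
  have hx: "h (\<alpha> x) = \<beta> x" if "x \<in> L" for x
  proof -
    have "\<exists>x'. x' \<in> L \<and> \<alpha> x' = \<alpha> x" using that by blast
    hence "(SOME x'. x' \<in> L \<and> \<alpha> x' = \<alpha> x) \<in> L \<and> \<alpha> (SOME x'. x' \<in> L \<and> \<alpha> x' = \<alpha> x) = \<alpha> x"
      by (rule someI_ex)
    thus ?thesis using assms that unfolding h_def by blast
  qed
  have "bij_betw h (\<alpha> ` L) (\<beta> ` L)"
    unfolding bij_betw_def
  proof
    show "inj_on h (\<alpha> ` L)"
    proof (rule inj_onI)
      fix a b assume "a \<in> \<alpha> ` L" "b \<in> \<alpha> ` L" "h a = h b"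
      then obtain x y where x: "x \<in> L" and y: "y \<in> L" and ax: "a = \<alpha> x" and "b = \<alpha> y" and hab: "h a = h b" by blast
      hence "\<beta> x = \<beta> y" using hx[OF x] hx[OF y] by simp
      hence "\<alpha> x = \<alpha> y" using assms x y by blast
      thus "a = b" using ax \<open>b = \<alpha> y\<close> by simp
    qed
    have "h ` \<alpha> ` L = (\<lambda>x. h (\<alpha> x)) ` L" by (simp add: image_image)
    also have "\<dots> = \<beta> ` L" by (rule image_cong) (simp_all add: hx)
    finally show "h ` \<alpha> ` L = \<beta> ` L" .
  qed
  thus ?thesis by (rule bij_betw_same_card)
qed

lemma aff_dim_strict:
  assumes sg: "sgnset (A :: 'n::finite sidx set)" and BA: "B \<subset> A"
  shows "aff_dim (cface A) < aff_dim (cface B)"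
proof -
  obtain i s where isA: "(i,s) \<in> A" and isB: "(i,s) \<notin> B" using BA by auto
  define c :: real where "c = (if s then 1/4 else - (1/4))"
  define L where "L = {x :: real^'n. x $ i = c}"
  have affL: "affine L" unfolding affine_def L_def
  proof (intro ballI allI impI)
    fix x y :: "real^'n" and u v :: real
    assume "x \<in> {x. x $ i = c}" "y \<in> {x. x $ i = c}" "u + v = 1"
    hence e1: "(u *\<^sub>R x + v *\<^sub>R y) $ i = u * c + v * c" by simp
    have "u * c + v * c = (u + v) * c" by (rule distrib_right[symmetric])
    hence "(u *\<^sub>R x + v *\<^sub>R y) $ i = (u + v) * c" using e1 by simp
    thus "u *\<^sub>R x + v *\<^sub>R y \<in> {x. x $ i = c}" using \<open>u + v = 1\<close> by simp
  qed
  have "cface A \<subseteq> L"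
  proof
    fix x assume "x \<in> cface A"
    hence "x $ fst (i,s) = (if snd (i,s) then 1/4 else - (1/4))" using isA unfolding cface_mem by blast
    thus "x \<in> L" by (simp add: L_def c_def)
  qed
  hence h1: "affine hull (cface A) \<subseteq> L" using affL by (rule hull_minimal)
  have sgB: "sgnset B" using sg BA sgnset_subset by blast
  have "(i, \<not> s) \<notin> A"
  proof
    assume "(i, \<not> s) \<in> A"
    with sg isA have "(i, \<not> s) = (i, s)" unfolding sgnset_def by (metis fst_conv)
    thus False by simp
  qed
  hence "(i, \<not> s) \<notin> B" using BA by blast
  hence "(i, True) \<notin> B \<and> (i, False) \<notin> B" using isB by (cases s) auto
  hence "pt B $ i = 0" by (simp add: pt_def)
  hence "pt B \<notin> L" by (auto simp: L_def c_def)
  moreover have "pt B \<in> affine hull (cface B)" by (rule subsetD[OF hull_subset pt_in[OF sgB]])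
  ultimately have nsub: "\<not> affine hull (cface B) \<subseteq> affine hull (cface A)" using h1 by (meson subsetD)
  have sub: "affine hull (cface A) \<subseteq> affine hull (cface B)"
  proof (rule hull_mono)
    show "cface A \<subseteq> cface B" using BA by (intro cface_antimono) auto
  qed
  have "affine hull (cface A) \<subset> affine hull (cface B)" using sub nsub by (metis psubsetI)
  thus ?thesis by (rule aff_dim_psubset)
qed

locale sfpsl = fpsl +
  assumes S: "strong_fps \<omega> \<tau>"
begin

lemma strong:
  assumes "proper_face g" "vc g xs" "vc g ys" "cm xs ` g = cm ys ` g"
  shows "(\<forall>p\<in>g. cm xs p = cm ys p) \<and> (\<forall>l. g \<subseteq> facet l \<longrightarrow> PC xs l = PC ys l)"
proof -
  have "\<forall>f ks ks'. proper_face f \<longrightarrow> vc f ks \<longrightarrow> vc f ks' \<longrightarrow>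
        cm ks ` f = cm ks' ` f \<longrightarrow>
        (\<forall>p\<in>f. cm ks p = cm ks' p) \<and>
        (\<forall>l. f \<subseteq> facet l \<longrightarrow> PC ks l = PC ks' l)"
    using S unfolding strong_fps_def by (rule conjunct2)
  from this[rule_format, OF assms] show ?thesis by blast
qed

lemma PC_snoc: "PC (ks @ [m]) = PS m \<circ> PC ks" by (simp add: PC_append)

lemma cm_snoc: "cm (ks @ [m]) ` S = \<tau> m ` cm ks ` S"
  unfolding cm_append by (simp only: image_comp) simp

lemma img2: "(\<forall>p\<in>S. f1 (f2 p) = g1 (g2 p)) \<Longrightarrow> f1 ` f2 ` S = g1 ` g2 ` S"
  unfolding image_image by (rule image_cong[OF refl]) blast

end




context sfpsl begin

lemma main_count:
  assumes sgK: "sgnset (insert k J)" and kJ: "k \<notin> J" and Jne: "J \<noteq> {}"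
  shows "card (face_family \<tau> (cface (insert k J))) = card (face_family \<tau> (cface J)) \<or>
         card (face_family \<tau> (cface (insert k J))) = 2 * card (face_family \<tau> (cface J))"
proof -
  define K where "K = insert k J"
  define e where "e = cface K"
  define f where "f = cface J"
  have sgK': "sgnset K" using sgK K_def by simp
  have sgJ: "sgnset J" using sgK' sgnset_subset K_def by blast
  have kK: "k \<in> K" by (simp add: K_def)
  have JK: "J \<subseteq> K" by (auto simp: K_def)
  have ef: "e \<subseteq> f" unfolding e_def f_def by (rule cface_antimono[OF JK])
  have pe: "proper_face e" unfolding e_def by (rule proper_faceI[OF sgK']) (simp add: K_def)
  have pfa: "proper_face f" unfolding f_def by (rule proper_faceI[OF sgJ Jne])
  define L where "L = {ks. vc f ks}"
  define \<alpha> where "\<alpha> ks = cm ks ` e" for ks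
  define \<beta> where "\<beta> ks = cm ks ` f" for ks
  define \<gamma> where "\<gamma> ks = cm (ks @ [PC ks k]) ` e" for ks
  have vcK: "vc e ks" if "vc f ks" for ks using vc_mono[OF that ef] .
  have Kimg: "cm ks ` e = cface (PC ks ` K) \<and> sgnset (PC ks ` K) \<and> inj_on (PC ks) K" if "vc e ks" for ks
    using vc_face[OF sgK'] that unfolding e_def by blast
  have Jimg: "cm ks ` f = cface (PC ks ` J)" if "vc f ks" for ks
    using vc_face[OF sgJ] that unfolding f_def by blast
  have SE: "PC xs l = PC ys l" if a: "vc e xs" "vc e ys" "cm xs ` e = cm ys ` e" "l \<in> K" for xs ys l
  proof -
    have "e \<subseteq> facet l" unfolding e_def using sub_facet_iff[OF sgK'] a(4) by simp
    thus ?thesis using strong[OF pe a(1-3)] by blast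
  qed
  have vcsK: "vc e (ks @ [l]) \<longleftrightarrow> vc e ks \<and> l \<in> PC ks ` K" for ks l
    unfolding e_def by (rule vc_snoc[OF sgK'])
  have vcsJ: "vc f (ks @ [l]) \<longleftrightarrow> vc f ks \<and> l \<in> PC ks ` J" for ks l
    unfolding f_def by (rule vc_snoc[OF sgJ])
  have vcg: "vc e (ks @ [PC ks k])" if "vc f ks" for ks
    using vcsK vcK[OF that] kK by blast
  have ga: "\<gamma> ks = \<tau> (PC ks k) ` \<alpha> ks" for ks unfolding \<gamma>_def \<alpha>_def by (rule cm_snoc)
  have Ki: "\<alpha> ks = cface (PC ks ` K)" "sgnset (PC ks ` K)" "inj_on (PC ks) K" if "vc f ks" for ks
    using Kimg[OF vcK[OF that]] unfolding \<alpha>_def by auto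
  have afac: "\<alpha> ks \<subseteq> facet (PC ks x)" if "vc f ks" "x \<in> K" for ks x
  proof -
    have "PC ks x \<in> PC ks ` K" using that(2) by (rule imageI)
    thus ?thesis using sub_facet_iff[OF Ki(2)[OF that(1)]] Ki(1)[OF that(1)] by simp
  qed
  have sqs: "\<tau> (PS (PC ks k) (PC ks x)) ` \<tau> (PC ks k) ` \<alpha> ks =
             \<tau> (PS (PC ks x) (PC ks k)) ` \<tau> (PC ks x) ` \<alpha> ks"
       "PC ks x \<noteq> PC ks k"
       if v: "vc f ks" and xJ: "x \<in> J" for ks x
  proof -
    have xK: "x \<in> K" using xJ JK by blast
    have xk: "x \<noteq> k" using xJ kJ by blast
    show lm: "PC ks x \<noteq> PC ks k" using Ki(3)[OF v] xK kK xk unfolding inj_on_def by blast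
    have "PC ks x \<in> PC ks ` K" "PC ks k \<in> PC ks ` K" using xK kK by auto
    hence flm: "fst (PC ks k) \<noteq> fst (PC ks x)" using Ki(2)[OF v] lm unfolding sgnset_def by metis
    have sub2: "\<alpha> ks \<subseteq> cface {PC ks k, PC ks x}" unfolding Ki(1)[OF v]
      by (rule cface_antimono) (use xK kK in auto)
    have "\<forall>p\<in>\<alpha> ks. \<tau> (PS (PC ks k) (PC ks x)) (\<tau> (PC ks k) p) = \<tau> (PS (PC ks x) (PC ks k)) (\<tau> (PC ks x) p)"
      using square[OF flm] sub2 by blast
    thus "\<tau> (PS (PC ks k) (PC ks x)) ` \<tau> (PC ks k) ` \<alpha> ks =
             \<tau> (PS (PC ks x) (PC ks k)) ` \<tau> (PC ks x) ` \<alpha> ks" by (rule img2)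
  qed
  have gsnoc: "\<gamma> (ks @ [l]) = \<tau> (PS l (PC ks k)) ` \<tau> l ` \<alpha> ks" for ks l
    using ga[of "ks @ [l]"] by (simp add: PC_snoc \<alpha>_def cm_snoc)
  have kerAB: "\<forall>x\<in>L. \<forall>y\<in>L. (\<alpha> x = \<alpha> y) = (\<beta> x = \<beta> y)"
  proof (intro ballI)
    fix x y assume "x \<in> L" "y \<in> L"
    hence vx: "vc f x" "vc f y" by (auto simp: L_def)
    show "(\<alpha> x = \<alpha> y) = (\<beta> x = \<beta> y)"
    proof
      assume "\<alpha> x = \<alpha> y"
      hence "PC x l = PC y l" if "l \<in> J" for l
        using SE[OF vcK[OF vx(1)] vcK[OF vx(2)]] JK that unfolding \<alpha>_def by blast
      hence "PC x ` J = PC y ` J" by (simp cong: image_cong)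
      thus "\<beta> x = \<beta> y" unfolding \<beta>_def using Jimg vx by simp
    next
      assume "\<beta> x = \<beta> y"
      hence "\<forall>p\<in>f. cm x p = cm y p" using strong[OF pfa vx] unfolding \<beta>_def by blast
      hence "\<forall>p\<in>e. cm x p = cm y p" using ef by blast
      thus "\<alpha> x = \<alpha> y" unfolding \<alpha>_def by (simp cong: image_cong)
    qed
  qed
  have kerBA: "\<forall>x\<in>L. \<forall>y\<in>L. (\<gamma> x = \<gamma> y) = (\<alpha> x = \<alpha> y)"
  proof (intro ballI)
    fix x y assume "x \<in> L" "y \<in> L"
    hence vx: "vc f x" "vc f y" by (auto simp: L_def)
    show "(\<gamma> x = \<gamma> y) = (\<alpha> x = \<alpha> y)"
    proof
      assume g: "\<gamma> x = \<gamma> y"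
      have "PC (x @ [PC x k]) k = PC (y @ [PC y k]) k"
        using SE[OF vcg[OF vx(1)] vcg[OF vx(2)] _ kK] g unfolding \<gamma>_def by blast
      hence "\<omega> (PC x k) = \<omega> (PC y k)" by (simp add: PC_snoc)
      hence mm: "PC x k = PC y k" by (metis om_inv)
      have "\<alpha> x = \<tau> (\<omega> (PC x k)) ` \<gamma> x" using cancel[OF afac[OF vx(1) kK]] ga by simp
      also have "\<dots> = \<tau> (\<omega> (PC y k)) ` \<gamma> y" using g mm by simp
      also have "\<dots> = \<alpha> y" using cancel[OF afac[OF vx(2) kK]] ga by simp
      finally show "\<alpha> x = \<alpha> y" .
    next
      assume a: "\<alpha> x = \<alpha> y"
      have "PC x k = PC y k" using SE[OF vcK[OF vx(1)] vcK[OF vx(2)] _ kK] a unfolding \<alpha>_def by blast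
      thus "\<gamma> x = \<gamma> y" using a ga by simp
    qed
  qed
  define A where "A = \<alpha> ` L"
  define B where "B = \<gamma> ` L"
  have Fh: "face_family \<tau> f = \<beta> ` L" by (auto simp: face_family_def L_def \<beta>_def)
  have cardA: "card A = card (face_family \<tau> f)" unfolding A_def Fh by (rule card_kernel[OF kerAB])
  have cardB: "card B = card A" unfolding A_def B_def by (rule card_kernel[OF kerBA])
  have N: "\<exists>ks. vc f ks \<and> (cm ls ` e = \<alpha> ks \<or> cm ls ` e = \<gamma> ks)" if "vc e ls" for ls
    using that
  proof (induction ls rule: rev_induct)
    case Nil show ?case by (rule exI[of _ "[]"]) (simp add: \<alpha>_def)
  next
    case (snoc j ls)
    have vls: "vc e ls" and jin: "j \<in> PC ls ` K" using snoc.prems vcsK by auto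
    obtain ks where vks: "vc f ks" and alt: "cm ls ` e = \<alpha> ks \<or> cm ls ` e = \<gamma> ks"
      using snoc.IH[OF vls] by blast
    have img: "cm (ls @ [j]) ` e = \<tau> j ` cm ls ` e" by (rule cm_snoc)
    obtain x where xK: "x \<in> K" and jx: "j = PC ls x" using jin by blast
    from alt show ?case
    proof
      assume c1: "cm ls ` e = \<alpha> ks"
      have "PC ls x = PC ks x" using SE[OF vls vcK[OF vks] _ xK] c1 unfolding \<alpha>_def by blast
      hence jx': "j = PC ks x" using jx by simp
      show ?case
      proof (cases "x = k")
        case True
        have "cm (ls @ [j]) ` e = \<gamma> ks" using img c1 jx' True ga by simp
        thus ?thesis using vks by blast
      next
        case False
        hence xJ: "x \<in> J" using xK K_def by auto
        have v2: "vc f (ks @ [j])" using vcsJ vks xJ jx' by blast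
        have "cm (ls @ [j]) ` e = \<alpha> (ks @ [j])" using img c1 unfolding \<alpha>_def by (simp add: cm_snoc)
        thus ?thesis using v2 by blast
      qed
    next
      assume c2: "cm ls ` e = \<gamma> ks"
      define m where "m = PC ks k"
      have vkm: "vc e (ks @ [m])" using vcg[OF vks] m_def by simp
      have "PC ls x = PC (ks @ [m]) x" using SE[OF vls vkm _ xK] c2 unfolding \<gamma>_def m_def by blast
      hence jx': "j = PS m (PC ks x)" using jx by (simp add: PC_snoc)
      have c2': "cm ls ` e = \<tau> m ` \<alpha> ks" using c2 ga m_def by simp
      show ?case
      proof (cases "x = k")
        case True
        hence "j = \<omega> m" using jx' m_def by simp
        hence "cm (ls @ [j]) ` e = \<alpha> ks" using img c2' cancel[OF afac[OF vks kK]] m_def by simp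
        thus ?thesis using vks by blast
      next
        case False
        hence xJ: "x \<in> J" using xK K_def by auto
        have v2: "vc f (ks @ [PC ks x])" using vcsJ vks xJ by blast
        have "\<gamma> (ks @ [PC ks x]) = \<tau> (PS (PC ks x) m) ` \<tau> (PC ks x) ` \<alpha> ks"
          using gsnoc m_def by simp
        also have "\<dots> = \<tau> (PS m (PC ks x)) ` \<tau> m ` \<alpha> ks" using sqs(1)[OF vks xJ] m_def by simp
        also have "\<dots> = cm (ls @ [j]) ` e" using img c2' jx' by simp
        finally show ?thesis using v2 by metis
      qed
    qed
  qed
  define Q where "Q ks = (\<gamma> ks \<in> A)" for ks
  have Qcong: "Q x = Q y" if "vc f x" "vc f y" "\<alpha> x = \<alpha> y" for x y
  proof -
    have "\<gamma> x = \<gamma> y" using kerBA that unfolding L_def by blast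
    thus ?thesis unfolding Q_def by simp
  qed
  have Qfwd: "Q (ks @ [l])" if v: "vc f (ks @ [l])" and q: "Q ks" for ks l
  proof -
    have vks: "vc f ks" and lin: "l \<in> PC ks ` J" using v vcsJ by auto
    obtain x where xJ: "x \<in> J" and lx: "l = PC ks x" using lin by blast
    have xK: "x \<in> K" using xJ JK by blast
    define m where "m = PC ks k"
    obtain ks0 where v0: "vc f ks0" and g0: "\<gamma> ks = \<alpha> ks0" using q unfolding Q_def A_def L_def by blast
    have vkm: "vc e (ks @ [m])" using vcg[OF vks] m_def by simp
    have "PC ks0 x = PC (ks @ [m]) x"
      using SE[OF vcK[OF v0] vkm _ xK] g0 unfolding \<alpha>_def \<gamma>_def m_def by metis
    hence p0: "PC ks0 x = PS m l" by (simp add: PC_snoc lx)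
    have v0': "vc f (ks0 @ [PC ks0 x])" using vcsJ v0 xJ by blast
    have "\<gamma> (ks @ [l]) = \<tau> (PS l m) ` \<tau> l ` \<alpha> ks" using gsnoc m_def by simp
    also have "\<dots> = \<tau> (PS m l) ` \<tau> m ` \<alpha> ks" using sqs(1)[OF vks xJ] m_def lx by simp
    also have "\<dots> = \<tau> (PS m l) ` \<alpha> ks0" using g0 ga m_def by simp
    also have "\<dots> = \<alpha> (ks0 @ [PC ks0 x])" using p0 by (simp add: \<alpha>_def cm_snoc)
    finally show "Q (ks @ [l])" using v0' unfolding Q_def A_def L_def by blast
  qed
  have Qbwd: "Q ks" if v: "vc f (ks @ [l])" and q: "Q (ks @ [l])" for ks l
  proof -
    have vks: "vc f ks" and lin: "l \<in> PC ks ` J" using v vcsJ by auto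
    obtain x where xJ: "x \<in> J" and lx: "l = PC ks x" using lin by blast
    have "PC (ks @ [l]) x = \<omega> l" using lx by (simp add: PC_snoc)
    hence "\<omega> l \<in> PC (ks @ [l]) ` J" using xJ by (metis imageI)
    hence v2: "vc f ((ks @ [l]) @ [\<omega> l])" using vcsJ v by blast
    have q2: "Q ((ks @ [l]) @ [\<omega> l])" by (rule Qfwd[OF v2 q])
    have "\<alpha> ((ks @ [l]) @ [\<omega> l]) = \<tau> (\<omega> l) ` \<tau> l ` \<alpha> ks"
      unfolding \<alpha>_def by (simp only: cm_snoc)
    also have "\<dots> = \<alpha> ks" using cancel[OF afac[OF vks]] lx xJ JK by blast
    finally show "Q ks" using Qcong[OF v2 vks] q2 by simp
  qed
  have Qall: "Q ks = Q []" if "vc f ks" for ks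
    using that
  proof (induction ks rule: rev_induct)
    case Nil then show ?case by simp
  next
    case (snoc l ks)
    have "vc f ks" using snoc.prems vcsJ by blast
    thus ?case using snoc Qfwd Qbwd by blast
  qed
  have Eh: "face_family \<tau> e = A \<union> B"
  proof
    show "face_family \<tau> e \<subseteq> A \<union> B"
    proof
      fix X assume "X \<in> face_family \<tau> e"
      then obtain ls where "vc e ls" "X = cm ls ` e" by (auto simp: face_family_def)
      thus "X \<in> A \<union> B" using N unfolding A_def B_def L_def by blast
    qed
    show "A \<union> B \<subseteq> face_family \<tau> e"
      unfolding A_def B_def L_def face_family_def \<alpha>_def \<gamma>_def using vcK vcg by blast
  qed
  have "face_family \<tau> e \<subseteq> range cface"
  proof
    fix X assume "X \<in> face_family \<tau> e"
    then obtain ls where "vc e ls" "X = cm ls ` e" by (auto simp: face_family_def)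
    thus "X \<in> range cface" using Kimg by blast
  qed
  moreover have "finite (range (cface :: 'n::finite sidx set \<Rightarrow> _))" by (rule finite_imageI) simp
  ultimately have finE: "finite (face_family \<tau> e)" by (rule finite_subset)
  hence finA: "finite A" and finB: "finite B" using Eh by auto
  show ?thesis
  proof (cases "A \<inter> B = {}")
    case True
    have "card (face_family \<tau> e) = card A + card B" using Eh card_Un_disjoint[OF finA finB True] by simp
    thus ?thesis using cardA cardB unfolding e_def f_def K_def by simp
  next
    case False
    then obtain b where "b \<in> A" "b \<in> B" by blast
    then obtain ks1 where v1: "vc f ks1" and "\<gamma> ks1 \<in> A" unfolding B_def L_def by blast
    hence "Q ks1" unfolding Q_def by simp
    hence Q0: "Q []" using Qall[OF v1] by simp
    have "B \<subseteq> A"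
    proof
      fix X assume "X \<in> B"
      then obtain ks where v: "vc f ks" and X: "X = \<gamma> ks" unfolding B_def L_def by blast
      have "Q ks" using Qall[OF v] Q0 by simp
      thus "X \<in> A" using X unfolding Q_def by simp
    qed
    hence "B = A" using card_subset_eq[OF finA _ cardB] by blast
    hence "card (face_family \<tau> e) = card A" using Eh by simp
    thus ?thesis using cardA unfolding e_def f_def K_def by simp
  qed
qed

end


theorem mainTheorem5:
  fixes \<omega> :: "'n::finite sidx \<Rightarrow> 'n sidx"
    and \<tau> :: "'n sidx \<Rightarrow> real ^ 'n \<Rightarrow> real ^ 'n"
    and e f :: "(real ^ 'n) set"
  assumes "strong_fps \<omega> \<tau>" and "regular_fps \<omega> \<tau>"
    and "proper_face e" and "proper_face f" and "e \<subseteq> f"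
    and "aff_dim f - aff_dim e = 1"
  shows "card (face_family \<tau> e) = card (face_family \<tau> f)
       \<or> card (face_family \<tau> e) = 2 * card (face_family \<tau> f)"
proof -
  have Fps: "fps \<omega> \<tau>" using assms(1) unfolding strong_fps_def by (rule conjunct1)
  interpret sfpsl \<omega> \<tau> by (intro sfpsl.intro fpsl.intro sfpsl_axioms.intro Fps assms(1))
  obtain E where sgE: "sgnset E" and Ene: "E \<noteq> {}" and eE: "e = cface E"
    using assms(3) by (rule proper_faceE)
  obtain F where sgF: "sgnset F" and Fne: "F \<noteq> {}" and fF: "f = cface F"
    using assms(4) by (rule proper_faceE)
  have FE: "F \<subseteq> E" using cface_sub_imp[OF sgE] assms(5) eE fF by simp
  have "F \<noteq> E" using assms(6) eE fF by auto
  then obtain k where kE: "k \<in> E" and kF: "k \<notin> F" using FE by blast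
  have Eeq: "E = insert k F"
  proof (rule ccontr)
    assume "E \<noteq> insert k F"
    then obtain k2 where k2E: "k2 \<in> E" and k2n: "k2 \<notin> insert k F" using FE kE by blast
    define M where "M = insert k F"
    have ME: "M \<subset> E" using FE kE k2E k2n unfolding M_def by blast
    have FM: "F \<subset> M" using kF unfolding M_def by blast
    have sgM: "sgnset M" using sgE ME sgnset_subset by blast
    have "aff_dim e < aff_dim (cface M)" using aff_dim_strict[OF sgE ME] eE by simp
    moreover have "aff_dim (cface M) < aff_dim f" using aff_dim_strict[OF sgM FM] fF by simp
    ultimately show False using assms(6) by simp
  qed
  have "sgnset (insert k F)" using sgE Eeq by simp
  from main_count[OF this kF Fne] show ?thesis using eE fF Eeq by simp
qed

end
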